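(* Let $(S,d)$ be a metric space with at least two points. If $f\in\operatorname{ext}(B^S_{\mathrm{FM}})$, then $\|f\|_\infty=1$. If $f\in\operatorname{ext}_*(B^S_{\mathrm{FM}})$, then also $|f|_L=1$.
   Context: $\mathrm{BL}(S)$ is the space of bounded real-valued Lipschitz functions on $S$, $|f|_L=\sup_{x\neq y}|f(x)-f(y)|/d(x,y)$, $\|f\|_{\mathrm{FM}}=\max(\|f\|_\infty,|f|_L)$, $B^S_{\mathrm{FM}}=\{f\in\mathrm{BL}(S):\|f\|_{\mathrm{FM}}\le1\}$, $\operatorname{ext}$ denotes extreme points, and $\operatorname{ext}_*(B^S_{\mathrm{FM}})=\operatorname{ext}(B^S_{\mathrm{FM}})\setminus\{f\in B^S_{\mathrm{FM}}:|f|=\mathbf{1}\}$. *)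

theory Defs
  imports "HOL-Analysis.Analysis"
begin

definition BL :: "('a::metric_space \<Rightarrow> real) set" where
  "BL = {f. bounded (range f) \<and> (\<exists>C::real. lipschitz_on C UNIV f)}"

definition sup_norm :: "('a \<Rightarrow> real) \<Rightarrow> real" where
  "sup_norm f = (SUP x. \<bar>f x\<bar>)"

definition lip_const :: "('a::metric_space \<Rightarrow> real) \<Rightarrow> real" where
  "lip_const f = (SUP p \<in> {(x, y). x \<noteq> y}. \<bar>f (fst p) - f (snd p)\<bar> / dist (fst p) (snd p))"

definition fm_norm :: "('a::metric_space \<Rightarrow> real) \<Rightarrow> real" where
  "fm_norm f = max (sup_norm f) (lip_const f)"

definition B_FM :: "('a::metric_space \<Rightarrow> real) set" where
  "B_FM = {f \<in> BL. fm_norm f \<le> 1}"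

definition ext :: "('a \<Rightarrow> real) set \<Rightarrow> ('a \<Rightarrow> real) set" where
  "ext K = {f \<in> K. \<not> (\<exists>g\<in>K. \<exists>h\<in>K. \<exists>t::real. 0 < t \<and> t < 1 \<and> g \<noteq> h \<and>
                         f = (\<lambda>x. t * g x + (1 - t) * h x))}"

definition ext_star :: "('a::metric_space \<Rightarrow> real) set" where
  "ext_star = ext B_FM - {f \<in> B_FM. \<forall>x. \<bar>f x\<bar> = 1}"

end

theory Submission
  imports Defs
begin

lemma lip_bound:
  fixes f :: "'a::metric_space \<Rightarrow> real"
  assumes "f \<in> BL"
  shows "\<bar>f x - f y\<bar> \<le> lip_const f * dist x y"
proof (cases "x = y")
  case True then show ?thesis by simp
next
  case False
  from assms obtain C where C: "lipschitz_on C UNIV f" unfolding BL_def by auto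
  have bdd: "bdd_above ((\<lambda>p. \<bar>f (fst p) - f (snd p)\<bar> / dist (fst p) (snd p)) ` {(x, y). x \<noteq> y})"
  proof (rule bdd_aboveI2)
    fix p :: "'a \<times> 'a" assume "p \<in> {(x, y). x \<noteq> y}"
    then have "dist (fst p) (snd p) > 0" by auto
    moreover have "\<bar>f (fst p) - f (snd p)\<bar> \<le> C * dist (fst p) (snd p)"
      using lipschitz_onD[OF C] by (simp add: dist_real_def)
    ultimately show "\<bar>f (fst p) - f (snd p)\<bar> / dist (fst p) (snd p) \<le> C"
      by (simp add: divide_le_eq)
  qed
  have "\<bar>f x - f y\<bar> / dist x y \<le> lip_const f"
    unfolding lip_const_def
    using cSUP_upper[OF _ bdd, of "(x,y)"] False by auto
  moreover have "dist x y > 0" using False by simp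
  ultimately show ?thesis by (simp add: divide_le_eq)
qed

lemma lip_ge0:
  fixes f :: "'a::metric_space \<Rightarrow> real" and x y :: 'a
  assumes "f \<in> BL" "x \<noteq> y"
  shows "0 \<le> lip_const f"
proof -
  have "0 \<le> \<bar>f x - f y\<bar>" by simp
  also have "\<dots> \<le> lip_const f * dist x y" by (rule lip_bound[OF assms(1)])
  finally show ?thesis using assms(2)
    by (simp add: zero_le_mult_iff)
qed

lemma abs_le_sup:
  fixes f :: "'a \<Rightarrow> real"
  assumes "bounded (range f)"
  shows "\<bar>f x\<bar> \<le> sup_norm f"
proof -
  from assms obtain B where "\<forall>y\<in>range f. norm y \<le> B" by (auto simp: bounded_iff)
  then have "bdd_above (range (\<lambda>x. \<bar>f x\<bar>))" by (auto intro!: bdd_aboveI2)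
  then show ?thesis unfolding sup_norm_def by (rule cSUP_upper[OF UNIV_I])
qed

lemma in_B_FM:
  fixes g :: "'a::metric_space \<Rightarrow> real"
  assumes two: "\<exists>x y::'a. x \<noteq> y"
  and b: "\<And>x. \<bar>g x\<bar> \<le> 1" and l: "\<And>x y. \<bar>g x - g y\<bar> \<le> dist x y"
  shows "g \<in> B_FM"
proof -
  have bd: "bounded (range g)" using b by (auto simp: bounded_iff)
  have "lipschitz_on 1 UNIV g" by (rule lipschitz_onI) (use l in \<open>simp_all add: dist_real_def\<close>)
  then have BL: "g \<in> BL" using bd unfolding BL_def by auto
  have s: "sup_norm g \<le> 1" unfolding sup_norm_def by (rule cSUP_least) (simp_all add: b)
  have ne: "{(x, y). x \<noteq> (y::'a)} \<noteq> {}" using two by auto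
  have "lip_const g \<le> 1" unfolding lip_const_def
  proof (rule cSUP_least[OF ne])
    fix p :: "'a \<times> 'a" assume "p \<in> {(x, y). x \<noteq> y}"
    then have "dist (fst p) (snd p) > 0" by auto
    then show "\<bar>g (fst p) - g (snd p)\<bar> / dist (fst p) (snd p) \<le> 1"
      using l[of "fst p" "snd p"] by (simp add: divide_le_eq)
  qed
  then show ?thesis using BL s unfolding B_FM_def fm_norm_def by auto
qed

lemma ext_contra:
  assumes "f \<in> ext K" "g \<in> K" "h \<in> K" "g \<noteq> h" "f = (\<lambda>x. (1/2) * g x + (1 - 1/2) * h x)"
  shows False
proof -
  have "\<exists>g\<in>K. \<exists>h\<in>K. \<exists>t::real. 0 < t \<and> t < 1 \<and> g \<noteq> h \<and>
                         f = (\<lambda>x. t * g x + (1 - t) * h x)"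
    using assms(2-5) by (intro bexI[of _ g] bexI[of _ h] exI[of _ "1/2"]) auto
  then show False using assms(1) unfolding ext_def by blast
qed

lemma part1:
  fixes f :: "'a::metric_space \<Rightarrow> real"
  assumes two: "\<exists>x y::'a. x \<noteq> y" and fe: "f \<in> ext B_FM"
  shows "sup_norm f = 1"
proof (rule ccontr)
  assume ne: "sup_norm f \<noteq> 1"
  have fB: "f \<in> B_FM" using fe unfolding ext_def by auto
  then have BL: "f \<in> BL" and le: "fm_norm f \<le> 1" unfolding B_FM_def by auto
  have s1: "sup_norm f \<le> 1" and L1: "lip_const f \<le> 1" using le unfolding fm_norm_def by auto
  define e where "e = 1 - sup_norm f"
  have e: "e > 0" using ne s1 unfolding e_def by auto
  have bd: "bounded (range f)" using BL unfolding BL_def by auto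
  have lip: "\<bar>f x - f y\<bar> \<le> dist x y" for x y
  proof -
    have "\<bar>f x - f y\<bar> \<le> lip_const f * dist x y" by (rule lip_bound[OF BL])
    also have "\<dots> \<le> dist x y" using mult_right_mono[OF L1 zero_le_dist] by simp
    finally show ?thesis .
  qed
  have g: "(\<lambda>x. f x + e) \<in> B_FM"
  proof (rule in_B_FM[OF two])
    fix x
    have "\<bar>f x\<bar> \<le> sup_norm f" by (rule abs_le_sup[OF bd])
    then show "\<bar>f x + e\<bar> \<le> 1" using s1 unfolding e_def by (simp only: abs_le_iff) linarith
  qed (simp add: lip)
  have h: "(\<lambda>x. f x - e) \<in> B_FM"
  proof (rule in_B_FM[OF two])
    fix x
    have "\<bar>f x\<bar> \<le> sup_norm f" by (rule abs_le_sup[OF bd])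
    then show "\<bar>f x - e\<bar> \<le> 1" using s1 unfolding e_def by (simp only: abs_le_iff) linarith
  qed (simp add: lip)
  have neq: "(\<lambda>x. f x + e) \<noteq> (\<lambda>x. f x - e)"
  proof
    assume "(\<lambda>x. f x + e) = (\<lambda>x. f x - e)"
    then have "f undefined + e = f undefined - e" by metis
    then show False using e by simp
  qed
  show False
    by (rule ext_contra[OF fe g h neq]) (simp add: fun_eq_iff field_simps)
qed

theorem lemma3p2:
  fixes f :: "'a::metric_space \<Rightarrow> real"
  assumes "\<exists>x y::'a. x \<noteq> y"
  shows "(f \<in> ext B_FM \<longrightarrow> sup_norm f = 1) \<and>
         (f \<in> ext_star \<longrightarrow> sup_norm f = 1 \<and> lip_const f = 1)"
proof (intro conjI impI)
  show "f \<in> ext B_FM \<Longrightarrow> sup_norm f = 1" using part1[OF assms] .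
  assume fs: "f \<in> ext_star"
  then have fe: "f \<in> ext B_FM" unfolding ext_star_def by auto
  then show "sup_norm f = 1" using part1[OF assms] by blast
  have fB: "f \<in> B_FM" using fe unfolding ext_def by auto
  then have BL: "f \<in> BL" and le: "fm_norm f \<le> 1" unfolding B_FM_def by auto
  have s1: "sup_norm f \<le> 1" and L1: "lip_const f \<le> 1" using le unfolding fm_norm_def by auto
  have bd: "bounded (range f)" using BL unfolding BL_def by auto
  have fa: "\<bar>f x\<bar> \<le> 1" for x using abs_le_sup[OF bd, of x] s1 by simp
  obtain x0 where x0: "\<bar>f x0\<bar> \<noteq> 1" using fs fB unfolding ext_star_def by auto
  have L0: "0 \<le> lip_const f" using assms lip_ge0[OF BL] by blast
  show "lip_const f = 1"
  proof (rule ccontr)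
    assume "lip_const f \<noteq> 1"
    then have Llt: "lip_const f < 1" using L1 by simp
    define L where "L = lip_const f"
    define e where "e = 1 - L"
    define d where "d = 1 - \<bar>f x0\<bar>"
    define phi where "phi = (\<lambda>x. max 0 (d - dist x x0))"
    have e: "0 < e" "e \<le> 1" using Llt L0 unfolding e_def L_def by auto
    have d: "0 < d" using x0 fa[of x0] unfolding d_def by auto
    have lipf: "\<bar>f x - f y\<bar> \<le> L * dist x y" for x y unfolding L_def by (rule lip_bound[OF BL])
    have lipphi: "\<bar>phi x - phi y\<bar> \<le> dist x y" for x y
    proof -
      have "\<bar>dist x x0 - dist y x0\<bar> \<le> dist x y" using dist_triangle[of x x0 y] dist_triangle[of y x0 x] dist_commute[of x y] by (simp add: abs_le_iff) 
      then show ?thesis unfolding phi_def by (auto simp: max_def abs_le_iff)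
    qed
    have bnd: "\<bar>f x\<bar> + e * phi x \<le> 1" for x
    proof (cases "dist x x0 \<le> d")
      case False then show ?thesis using fa[of x] unfolding phi_def by auto
    next
      case True
      have "\<bar>f x\<bar> \<le> \<bar>f x0\<bar> + \<bar>f x - f x0\<bar>" by simp
      also have "\<dots> \<le> \<bar>f x0\<bar> + L * dist x x0" using lipf[of x x0] by simp
      also have "\<dots> \<le> \<bar>f x0\<bar> + dist x x0" using mult_right_mono[OF L1 zero_le_dist, of x x0] unfolding L_def
        by simp
      finally have a: "\<bar>f x\<bar> \<le> \<bar>f x0\<bar> + dist x x0" .
      have "e * phi x \<le> 1 * (d - dist x x0)" unfolding phi_def using True e
        by (intro mult_mono) auto
      then show ?thesis using a unfolding d_def by simp
    qed
    have lipg: "\<bar>(f x + s * (e * phi x)) - (f y + s * (e * phi y))\<bar> \<le> dist x y"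
      if "\<bar>s\<bar> = 1" for x y and s :: real
    proof -
      have "\<bar>(f x + s * (e * phi x)) - (f y + s * (e * phi y))\<bar> \<le> \<bar>f x - f y\<bar> + e * \<bar>phi x - phi y\<bar>"
      proof -
        have "(f x + s * (e * phi x)) - (f y + s * (e * phi y)) = (f x - f y) + s * (e * (phi x - phi y))"
          by (simp add: algebra_simps)
        moreover have "\<bar>s * (e * (phi x - phi y))\<bar> = e * \<bar>phi x - phi y\<bar>"
          using that e by (simp add: abs_mult)
        ultimately show ?thesis by (metis abs_triangle_ineq)
      qed
      also have "\<dots> \<le> L * dist x y + e * dist x y"
        using lipf[of x y] lipphi[of x y] e by (intro add_mono mult_left_mono) auto
      also have "\<dots> = dist x y" unfolding e_def by (simp add: algebra_simps)
      finally show ?thesis .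
    qed
    have phi0: "phi x \<ge> 0" for x unfolding phi_def by simp
    have g: "(\<lambda>x. f x + 1 * (e * phi x)) \<in> B_FM"
    proof (rule in_B_FM[OF assms])
      fix x have "0 \<le> e * phi x" using phi0[of x] e by simp
      then show "\<bar>f x + 1 * (e * phi x)\<bar> \<le> 1"
        using bnd[of x] by (simp only: abs_le_iff) linarith
    qed (rule lipg, simp)
    have h: "(\<lambda>x. f x + (-1) * (e * phi x)) \<in> B_FM"
    proof (rule in_B_FM[OF assms])
      fix x have "0 \<le> e * phi x" using phi0[of x] e by simp
      then show "\<bar>f x + (-1) * (e * phi x)\<bar> \<le> 1"
        using bnd[of x] by (simp only: abs_le_iff) linarith
    qed (rule lipg, simp)
    have neq: "(\<lambda>x. f x + 1 * (e * phi x)) \<noteq> (\<lambda>x. f x + (-1) * (e * phi x))"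
    proof
      assume "(\<lambda>x. f x + 1 * (e * phi x)) = (\<lambda>x. f x + (-1) * (e * phi x))"
      then have "f x0 + 1 * (e * phi x0) = f x0 + (-1) * (e * phi x0)" by metis
      moreover have "phi x0 = d" unfolding phi_def using d by simp
      ultimately show False using e d by simp
    qed
    show False
      by (rule ext_contra[OF fe g h neq]) (simp add: fun_eq_iff field_simps)
  qed
qed

end
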